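(* Let $\mathcal{M}$ be the set of compactly supported probability distributions on $\mathbb{R}$ (identified with their cdfs). A mapping $T:\mathcal{M}\to\mathcal{M}$ satisfies $T\circ T^u=T^u\circ T$ for every utility function $u$ if and only if $T=T_d$ for some distortion function $d$.
   Context: Increasing means non-decreasing. A distortion function is an increasing function $d:[0,1]\to[0,1]$ with $d(0)=0$ and $d(1)=1$ (not necessarily continuous). A utility function is an increasing continuous function $u:\mathbb{R}\to\mathbb{R}$. For a distortion function $d$, the probability distortion $T_d:\mathcal{M}\to\mathcal{M}$ is defined by $T_d(F)(x)=\lim_{y\downarrow x} d(F(y))$ for $x\in\mathbb{R}$. For a utility function $u$, the utility transform $T^u:\mathcal{M}\to\mathcal{M}$ maps the distribution of a random variable $X$ to the distribution of $u(X)$, i.e. $T^u(F)=F\circ u^{-1}$ with $F$ viewed as a measure. *)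

theory Defs
  imports "HOL-Probability.Probability"
begin

definition cdfM :: "(real \<Rightarrow> real) set" where
  "cdfM = {F. mono F \<and> (\<forall>x. continuous (at_right x) F)
      \<and> (F \<longlongrightarrow> 0) at_bot \<and> (F \<longlongrightarrow> 1) at_top
      \<and> (\<exists>a b. \<forall>x. (x < a \<longrightarrow> F x = 0) \<and> (b \<le> x \<longrightarrow> F x = 1))}"

definition distortion :: "(real \<Rightarrow> real) \<Rightarrow> bool" where
  "distortion d \<longleftrightarrow> mono_on {0..1} d \<and> d ` {0..1} \<subseteq> {0..1} \<and> d 0 = 0 \<and> d 1 = 1"

definition utility :: "(real \<Rightarrow> real) \<Rightarrow> bool" where
  "utility u \<longleftrightarrow> mono u \<and> continuous_on UNIV u"

definition prob_distortion :: "(real \<Rightarrow> real) \<Rightarrow> (real \<Rightarrow> real) \<Rightarrow> (real \<Rightarrow> real)" where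
  "prob_distortion d F = (\<lambda>x. Lim (at_right x) (\<lambda>y. d (F y)))"

definition utility_transform :: "(real \<Rightarrow> real) \<Rightarrow> (real \<Rightarrow> real) \<Rightarrow> (real \<Rightarrow> real)" where
  "utility_transform u F = cdf (distr (interval_measure F) borel u)"

end

theory Submission
  imports Defs
begin

lemma cdfM_D:
  assumes "F \<in> cdfM"
  shows "mono F" "\<And>x. continuous (at_right x) F" "(F \<longlongrightarrow> 0) at_bot" "(F \<longlongrightarrow> 1) at_top"
    "\<exists>a b. \<forall>x. (x < a \<longrightarrow> F x = 0) \<and> (b \<le> x \<longrightarrow> F x = 1)"
  using assms unfolding cdfM_def by auto

lemma cdfM_bounds:
  assumes "F \<in> cdfM" shows "0 \<le> F x" "F x \<le> 1"
proof -
  obtain a b where ab: "\<forall>x. (x < a \<longrightarrow> F x = 0) \<and> (b \<le> x \<longrightarrow> F x = 1)"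
    using cdfM_D(5)[OF assms] by blast
  have m: "mono F" using cdfM_D(1)[OF assms] .
  have "F (min x (a-1)) \<le> F x" using m by (simp add: monoD)
  moreover have "F (min x (a-1)) = 0" using ab by auto
  ultimately show "0 \<le> F x" by simp
  have "F x \<le> F (max x b)" using m by (simp add: monoD)
  moreover have "F (max x b) = 1" using ab by auto
  ultimately show "F x \<le> 1" by simp
qed

lemma cdfM_I:
  assumes "mono F" "\<And>x. continuous (at_right x) F" "\<And>x. x < a \<Longrightarrow> F x = 0" "\<And>x. b \<le> x \<Longrightarrow> F x = 1"
  shows "F \<in> cdfM"
proof -
  have "(F \<longlongrightarrow> 0) at_bot"
    by (rule tendsto_eventually) (auto simp: eventually_at_bot_dense intro!: exI[of _ a] assms(3))
  moreover have "(F \<longlongrightarrow> 1) at_top"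
    by (rule tendsto_eventually) (auto simp: eventually_at_top_linorder intro!: exI[of _ b] assms(4))
  ultimately show ?thesis using assms unfolding cdfM_def by blast
qed

lemma rc_ev: "eventually (\<lambda>s. f s = f x) (at_right x) \<Longrightarrow> continuous (at_right x) f"
  unfolding continuous_within by (rule tendsto_eventually)

lemma ut_measure:
  assumes "F \<in> cdfM" "utility u"
  shows "utility_transform u F t = measure (interval_measure F) {s. u s \<le> t}"
proof -
  have "u \<in> borel_measurable borel"
    using assms(2) unfolding utility_def by (intro borel_measurable_continuous_onI) simp
  then have um: "u \<in> measurable (interval_measure F) borel"
    by (simp add: measurable_def)
  show ?thesis
    unfolding utility_transform_def cdf_def
    by (subst measure_distr[OF um]) (auto simp: vimage_def)
qed

lemma im_vals:
  assumes "F \<in> cdfM"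
  shows "measure (interval_measure F) {..c} = F c" "measure (interval_measure F) UNIV = 1"
    "measure (interval_measure F) {} = 0"
proof -
  have m: "\<And>x y. x \<le> y \<Longrightarrow> F x \<le> F y" using cdfM_D(1)[OF assms] by (simp add: monoD)
  note r = cdfM_D(2)[OF assms] cdfM_D(3)[OF assms] cdfM_D(4)[OF assms]
  show "measure (interval_measure F) {..c} = F c"
    by (rule measure_interval_measure_Iic[OF m r(1,2)])
  have "emeasure (interval_measure F) UNIV = 1"
    using interval_measure_UNIV[OF m r] by simp
  then show "measure (interval_measure F) UNIV = 1" by (simp add: measure_def)
  show "measure (interval_measure F) {} = 0" by simp
qed

lemma pre_struct:
  assumes "utility u"
  shows "{s. u s \<le> t} = {} \<or> {s. u s \<le> t} = UNIV \<or> (\<exists>c. {s. u s \<le> t} = {..c} \<and> u c = t)"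
proof -
  have mo: "mono u" and co: "continuous_on UNIV u" using assms unfolding utility_def by auto
  let ?S = "{s. u s \<le> t}"
  { assume ne: "?S \<noteq> {}" and nu: "?S \<noteq> UNIV"
    from nu obtain z where "\<not> u z \<le> t" by auto
    then have z: "u z > t" by simp
    have ub: "\<And>s. s \<in> ?S \<Longrightarrow> s \<le> z"
    proof (rule ccontr)
      fix s assume "s \<in> ?S" "\<not> s \<le> z"
      then have "u z \<le> u s" using mo by (simp add: monoD)
      then show False using \<open>s \<in> ?S\<close> z by simp
    qed
    have bdd: "bdd_above ?S" using ub by (auto simp: bdd_above_def)
    have cl: "closed ?S" using co by (intro closed_Collect_le continuous_intros) (auto simp: continuous_on_eq_continuous_within)
    define c where "c = Sup ?S"
    have cS: "c \<in> ?S" unfolding c_def by (rule closed_contains_Sup[OF ne bdd cl])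
    have eq: "?S = {..c}"
    proof
      show "?S \<subseteq> {..c}" unfolding c_def using bdd by (auto intro: cSup_upper)
      show "{..c} \<subseteq> ?S"
      proof
        fix s assume "s \<in> {..c}"
        then have "u s \<le> u c" using mo by (simp add: monoD)
        then show "s \<in> ?S" using cS by simp
      qed
    qed
    have "u c = t"
    proof (rule ccontr)
      assume "u c \<noteq> t"
      then have lt: "u c < t" using cS by simp
      have op: "open {s. u s < t}" using co
        by (intro open_Collect_less continuous_intros) (auto simp: continuous_on_eq_continuous_within)
      then obtain e where e: "e > 0" "ball c e \<subseteq> {s. u s < t}"
        using lt by (meson mem_Collect_eq open_contains_ball_eq)
      have "c + e/2 \<in> ball c e" using e by (simp add: dist_real_def)
      then have "c + e/2 \<in> ?S" using e by auto
      then show False using eq e by auto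
    qed
    then have ?thesis using eq by blast }
  then show ?thesis by blast
qed

lemma ut_vals:
  assumes "F \<in> cdfM" "utility u"
  shows "{s. u s \<le> t} = {..c} \<Longrightarrow> utility_transform u F t = F c"
    "{s. u s \<le> t} = UNIV \<Longrightarrow> utility_transform u F t = 1"
    "{s. u s \<le> t} = {} \<Longrightarrow> utility_transform u F t = 0"
  using ut_measure[OF assms, of t] im_vals[OF assms(1)] by auto


definition Gd :: "(real \<Rightarrow> real) \<Rightarrow> (real \<Rightarrow> real) \<Rightarrow> real \<Rightarrow> real" where
  "Gd d F x = Inf ((\<lambda>y. d (F y)) ` {x<..})"

lemma dF_props:
  assumes "distortion d" "F \<in> cdfM"
  shows "\<And>a b. a \<le> b \<Longrightarrow> d (F a) \<le> d (F b)" "\<And>a. 0 \<le> d (F a)" "\<And>a. d (F a) \<le> 1"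
proof -
  have mo: "mono_on {0..1} d" and rg: "d ` {0..1} \<subseteq> {0..1}" using assms(1) unfolding distortion_def by auto
  have F01: "\<And>a. F a \<in> {0..1}" using cdfM_bounds[OF assms(2)] by auto
  show "\<And>a b. a \<le> b \<Longrightarrow> d (F a) \<le> d (F b)"
  proof -
    fix a b :: real assume "a \<le> b"
    then have "F a \<le> F b" using cdfM_D(1)[OF assms(2)] by (simp add: monoD)
    then show "d (F a) \<le> d (F b)" using mo F01 by (simp add: mono_onD)
  qed
  show "\<And>a. 0 \<le> d (F a)" "\<And>a. d (F a) \<le> 1" using rg F01 by (meson atLeastAtMost_iff image_subset_iff)+
qed

lemma Gd_props:
  assumes "distortion d" "F \<in> cdfM"
  shows "\<And>z. x < z \<Longrightarrow> Gd d F x \<le> d (F z)"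
    "\<And>a. Gd d F x < a \<Longrightarrow> \<exists>z>x. d (F z) < a"
    "0 \<le> Gd d F x" "Gd d F x \<le> 1"
    "((\<lambda>y. d (F y)) \<longlongrightarrow> Gd d F x) (at_right x)"
    "prob_distortion d F x = Gd d F x"
proof -
  note P = dF_props[OF assms]
  have bdd: "bdd_below ((\<lambda>y. d (F y)) ` {x<..})" using P(2) by (auto simp: bdd_below_def)
  have ne: "(\<lambda>y. d (F y)) ` {x<..} \<noteq> {}" by auto
  show lo: "\<And>z. x < z \<Longrightarrow> Gd d F x \<le> d (F z)" unfolding Gd_def using bdd by (auto intro: cInf_lower)
  show "\<And>a. Gd d F x < a \<Longrightarrow> \<exists>z>x. d (F z) < a"
    unfolding Gd_def using cInf_lessD[OF ne] by auto
  show "0 \<le> Gd d F x" unfolding Gd_def using ne P(2) by (auto intro: cInf_greatest)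
  show "Gd d F x \<le> 1" using lo[of "x+1"] P(3)[of "x+1"] by simp
  have "((\<lambda>y. d (F y)) \<longlongrightarrow> Inf ((\<lambda>y. d (F y)) ` ({x<..} \<inter> UNIV))) (at x within ({x<..} \<inter> UNIV))"
    by (rule Lim_right_bound[where K=0]) (use P in auto)
  then show t: "((\<lambda>y. d (F y)) \<longlongrightarrow> Gd d F x) (at_right x)" unfolding Gd_def by simp
  show "prob_distortion d F x = Gd d F x"
    unfolding prob_distortion_def by (rule tendsto_Lim[OF _ t]) simp
qed

lemma pd_cdfM:
  assumes "distortion d" "F \<in> cdfM"
  shows "prob_distortion d F \<in> cdfM"
proof -
  note G = Gd_props[OF assms]
  note P = dF_props[OF assms]
  have eq: "prob_distortion d F = Gd d F" using G(6) by auto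
  obtain a b where ab: "\<forall>x. (x < a \<longrightarrow> F x = 0) \<and> (b \<le> x \<longrightarrow> F x = 1)"
    using cdfM_D(5)[OF assms(2)] by blast
  have d0: "d 0 = 0" and d1: "d 1 = 1" using assms(1) unfolding distortion_def by auto
  have "Gd d F \<in> cdfM"
  proof (rule cdfM_I)
    show "mono (Gd d F)"
    proof (rule monoI)
      fix x y :: real assume "x \<le> y"
      have bdd: "bdd_below ((\<lambda>y. d (F y)) ` {x<..})" using P(2) by (auto simp: bdd_below_def)
      show "Gd d F x \<le> Gd d F y" unfolding Gd_def
        by (rule cInf_superset_mono) (use bdd \<open>x \<le> y\<close> in auto)
    qed
    show "continuous (at_right x) (Gd d F)" for x
      unfolding continuous_within
    proof (rule order_tendstoI)
      fix a assume "a < Gd d F x"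
      have "\<forall>y>x. a < Gd d F y"
      proof (intro allI impI)
        fix y assume "x < y"
        have bdd: "bdd_below ((\<lambda>y. d (F y)) ` {x<..})" using P(2) by (auto simp: bdd_below_def)
        have "Gd d F x \<le> Gd d F y" unfolding Gd_def
          by (rule cInf_superset_mono) (use bdd \<open>x < y\<close> in auto)
        then show "a < Gd d F y" using \<open>a < Gd d F x\<close> by simp
      qed
      then show "\<forall>\<^sub>F y in at_right x. a < Gd d F y"
        by (auto simp: eventually_at_right_field intro: exI[of _ "x+1"])
    next
      fix a assume "Gd d F x < a"
      then obtain z where z: "z > x" "d (F z) < a" using G(2) by blast
      have "\<forall>y>x. y < z \<longrightarrow> Gd d F y < a"
        using Gd_props(1)[OF assms] z by (meson le_less_trans)
      then show "\<forall>\<^sub>F y in at_right x. Gd d F y < a"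
        using z by (auto simp: eventually_at_right_field)
    qed
    show "Gd d F x = 0" if "x < a" for x
    proof -
      have "Gd d F x \<le> d (F ((x+a)/2))" using Gd_props(1)[OF assms, of x "(x+a)/2"] that by simp
      also have "F ((x+a)/2) = 0" using ab that by simp
      finally show ?thesis using G(3)[of x] d0 by simp
    qed
    show "Gd d F x = 1" if "b \<le> x" for x
    proof -
      have "(\<lambda>y. d (F y)) ` {x<..} = {1}" using ab that d1
        by (auto simp: image_def intro: exI[of _ "x+1"])
      then show ?thesis unfolding Gd_def by simp
    qed
  qed
  then show ?thesis using eq by simp
qed


lemma commute_pd:
  assumes "distortion d" "F \<in> cdfM" "utility u"
  shows "prob_distortion d (utility_transform u F) t = utility_transform u (prob_distortion d F) t"
proof -
  note G = Gd_props[OF assms(1,2)]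
  note P = dF_props[OF assms(1,2)]
  have Gc: "prob_distortion d F \<in> cdfM" by (rule pd_cdfM[OF assms(1,2)])
  have mo: "mono u" using assms(3) unfolding utility_def by auto
  have d0: "d 0 = 0" and d1: "d 1 = 1" using assms(1) unfolding distortion_def by auto
  let ?h = "\<lambda>y. d (utility_transform u F y)"
  let ?R = "utility_transform u (prob_distortion d F) t"
  have "(?h \<longlongrightarrow> ?R) (at_right t)"
  proof -
    consider (e) "{s. u s \<le> t} = {}" | (U) "{s. u s \<le> t} = UNIV" | (c) c where "{s. u s \<le> t} = {..c}" "u c = t"
      using pre_struct[OF assms(3), of t] by blast
    then show ?thesis
    proof cases
      case U
      then have R: "?R = 1" using ut_vals(2)[OF Gc assms(3)] by simp
      have "\<forall>y>t. ?h y = 1"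
      proof (intro allI impI)
        fix y assume "t < y"
        then have "{s. u s \<le> y} = UNIV" using U by (auto simp: set_eq_iff intro: order_trans)
        then show "?h y = 1" using ut_vals(2)[OF assms(2,3)] d1 by simp
      qed
      then have "eventually (\<lambda>y. ?h y = 1) (at_right t)"
        by (auto simp: eventually_at_right_field intro: exI[of _ "t+1"])
      then show ?thesis unfolding R by (rule tendsto_eventually)
    next
      case e
      then have R: "?R = 0" using ut_vals(3)[OF Gc assms(3)] by simp
      obtain a b where ab: "\<forall>x. (x < a \<longrightarrow> F x = 0) \<and> (b \<le> x \<longrightarrow> F x = 1)"
        using cdfM_D(5)[OF assms(2)] by blast
      have ua: "u (a-1) > t" using e by (auto simp: set_eq_iff not_le)
      have "\<forall>y>t. y < u (a-1) \<longrightarrow> ?h y = 0"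
      proof (intro allI impI)
        fix y assume y: "t < y" "y < u (a-1)"
        consider (e') "{s. u s \<le> y} = {}" | (U') "{s. u s \<le> y} = UNIV" | (c') c where "{s. u s \<le> y} = {..c}" "u c = y"
          using pre_struct[OF assms(3), of y] by blast
        then show "?h y = 0"
        proof cases
          case e' then show ?thesis using ut_vals(3)[OF assms(2,3)] d0 by simp
        next
          case U' then have "u (a-1) \<le> y" by blast
          then show ?thesis using y by simp
        next
          case c'
          have "c < a - 1"
          proof (rule ccontr)
            assume "\<not> c < a - 1"
            then have "u (a-1) \<le> u c" using mo by (simp add: monoD)
            then show False using c' y by simp
          qed
          then show ?thesis using ut_vals(1)[OF assms(2,3) c'(1)] ab d0 by simp
        qed
      qed
      then have "eventually (\<lambda>y. ?h y = 0) (at_right t)"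
        using ua by (auto simp: eventually_at_right_field)
      then show ?thesis unfolding R by (rule tendsto_eventually)
    next
      case c
      then have R: "?R = Gd d F c" using ut_vals(1)[OF Gc assms(3)] G(6) by simp
      show ?thesis unfolding R
      proof (rule order_tendstoI)
        fix a assume a: "a < Gd d F c"
        have "\<forall>y>t. a < ?h y"
        proof (intro allI impI)
          fix y assume y: "t < y"
          consider (e') "{s. u s \<le> y} = {}" | (U') "{s. u s \<le> y} = UNIV" | (c') c' where "{s. u s \<le> y} = {..c'}" "u c' = y"
            using pre_struct[OF assms(3), of y] by blast
          then show "a < ?h y"
          proof cases
            case e' have "c \<in> {s. u s \<le> y}" using c y by simp
            then show ?thesis using e' by simp
          next
            case U' then show ?thesis using ut_vals(2)[OF assms(2,3)] d1 a G(4)[of c] by simp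
          next
            case c'
            have "c < c'"
            proof (rule ccontr)
              assume "\<not> c < c'"
              then have "u c' \<le> u c" using mo by (simp add: monoD)
              then show False using c' c y by simp
            qed
            then have "Gd d F c \<le> d (F c')" using G(1) by simp
            then show ?thesis using ut_vals(1)[OF assms(2,3) c'(1)] a by simp
          qed
        qed
        then show "\<forall>\<^sub>F y in at_right t. a < ?h y"
          by (auto simp: eventually_at_right_field intro: exI[of _ "t+1"])
      next
        fix a assume a: "Gd d F c < a"
        then obtain z where z: "z > c" "d (F z) < a" using G(2) by blast
        have "z \<notin> {s. u s \<le> t}" using c z by simp
        then have uz: "u z > t" by simp
        have "\<forall>y>t. y < u z \<longrightarrow> ?h y < a"
        proof (intro allI impI)
          fix y assume y: "t < y" "y < u z"
          consider (e') "{s. u s \<le> y} = {}" | (U') "{s. u s \<le> y} = UNIV" | (c') c' where "{s. u s \<le> y} = {..c'}" "u c' = y"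
            using pre_struct[OF assms(3), of y] by blast
          then show "?h y < a"
          proof cases
            case e' have "c \<in> {s. u s \<le> y}" using c y by simp
            then show ?thesis using e' by simp
          next
            case U' then have "u z \<le> y" by blast
            then show ?thesis using y by simp
          next
            case c'
            have "c' < z"
            proof (rule ccontr)
              assume "\<not> c' < z"
              then have "u z \<le> u c'" using mo by (simp add: monoD)
              then show False using c' y by simp
            qed
            then have "d (F c') \<le> d (F z)" using P(1) by simp
            then show ?thesis using ut_vals(1)[OF assms(2,3) c'(1)] z by simp
          qed
        qed
        then show "\<forall>\<^sub>F y in at_right t. ?h y < a"
          using uz by (auto simp: eventually_at_right_field)
      qed
    qed
  qed
  then show ?thesis unfolding prob_distortion_def by (rule tendsto_Lim[rotated]) simp
qed


definition step3 :: "real \<Rightarrow> real \<Rightarrow> real \<Rightarrow> real" where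
  "step3 p q s = (if s < 0 then 0 else if s < 1 then p else if s < 2 then q else 1)"

definition bern :: "real \<Rightarrow> real \<Rightarrow> real" where
  "bern p s = (if s < 0 then 0 else if s < 1 then p else 1)"

definition insf :: "(real \<Rightarrow> real) \<Rightarrow> real \<Rightarrow> real \<Rightarrow> real" where
  "insf F y s = (if s < y then F s else if s < y + 1 then F y else F (s - 1))"

definition flat :: "real \<Rightarrow> real \<Rightarrow> real" where
  "flat y s = s - max 0 (min 1 (s - y))"

definition clampu :: "real \<Rightarrow> real \<Rightarrow> real" where
  "clampu y s = max 0 (min 1 (s - y))"

lemma step3_cdfM:
  assumes "0 \<le> p" "p \<le> q" "q \<le> 1"
  shows "step3 p q \<in> cdfM"
proof (rule cdfM_I[where a=0 and b=2])
  show "mono (step3 p q)" using assms by (auto simp: mono_def step3_def)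
  show "continuous (at_right x) (step3 p q)" for x
  proof (rule rc_ev)
    have "\<exists>b>x. \<forall>s>x. s < b \<longrightarrow> step3 p q s = step3 p q x"
    proof (cases "x < 0")
      case True then show ?thesis by (intro exI[of _ 0]) (auto simp: step3_def)
    next
      case f1: False
      show ?thesis
      proof (cases "x < 1")
        case True then show ?thesis using f1 by (intro exI[of _ 1]) (auto simp: step3_def)
      next
        case f2: False
        show ?thesis
        proof (cases "x < 2")
          case True then show ?thesis using f1 f2 by (intro exI[of _ 2]) (auto simp: step3_def)
        next
          case False then show ?thesis using f1 f2 by (intro exI[of _ "x+1"]) (auto simp: step3_def)
        qed
      qed
    qed
    then show "\<forall>\<^sub>F s in at_right x. step3 p q s = step3 p q x" by (simp add: eventually_at_right_field)
  qed
qed (auto simp: step3_def)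

lemma bern_cdfM:
  assumes "0 \<le> p" "p \<le> 1"
  shows "bern p \<in> cdfM"
proof (rule cdfM_I[where a=0 and b=1])
  show "mono (bern p)" using assms by (auto simp: mono_def bern_def)
  show "continuous (at_right x) (bern p)" for x
  proof (rule rc_ev)
    have "\<exists>b>x. \<forall>s>x. s < b \<longrightarrow> bern p s = bern p x"
    proof (cases "x < 0")
      case True then show ?thesis by (intro exI[of _ 0]) (auto simp: bern_def)
    next
      case f1: False
      show ?thesis
      proof (cases "x < 1")
        case True then show ?thesis using f1 by (intro exI[of _ 1]) (auto simp: bern_def)
      next
        case False then show ?thesis using f1 by (intro exI[of _ "x+1"]) (auto simp: bern_def)
      qed
    qed
    then show "\<forall>\<^sub>F s in at_right x. bern p s = bern p x" by (simp add: eventually_at_right_field)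
  qed
qed (auto simp: bern_def)

lemma insf_cdfM:
  assumes "F \<in> cdfM"
  shows "insf F y \<in> cdfM"
proof -
  obtain a b where ab: "\<forall>x. (x < a \<longrightarrow> F x = 0) \<and> (b \<le> x \<longrightarrow> F x = 1)"
    using cdfM_D(5)[OF assms] by blast
  have m: "\<And>x z. x \<le> z \<Longrightarrow> F x \<le> F z" using cdfM_D(1)[OF assms] by (simp add: monoD)
  note rc = cdfM_D(2)[OF assms]
  show ?thesis
  proof (rule cdfM_I[where a="min a y" and b="max (b+1) (y+1)"])
    show "mono (insf F y)"
    proof (rule monoI)
      fix s z :: real assume "s \<le> z"
      then show "insf F y s \<le> insf F y z" unfolding insf_def using m by auto
    qed
    show "continuous (at_right x) (insf F y)" for x
    proof (cases "x < y")
      case True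
      have ev: "\<forall>\<^sub>F s in at_right x. F s = insf F y s"
        using True by (auto simp: eventually_at_right_field insf_def intro!: exI[of _ y])
      have "(F \<longlongrightarrow> F x) (at_right x)" using rc[of x] by (simp add: continuous_within)
      then have "(insf F y \<longlongrightarrow> F x) (at_right x)" by (rule tendsto_cong[THEN iffD1, OF ev])
      then show ?thesis using True by (simp add: continuous_within insf_def)
    next
      case f1: False
      show ?thesis
      proof (cases "x < y + 1")
        case True
        show ?thesis
          by (rule rc_ev) (use True f1 in \<open>auto simp: eventually_at_right_field insf_def intro!: exI[of _ "y+1"]\<close>)
      next
        case False
        have ev: "\<forall>\<^sub>F s in at_right x. F (s - 1) = insf F y s"
          using False f1 by (auto simp: eventually_at_right_field insf_def intro!: exI[of _ "x+1"])
        have "(F \<longlongrightarrow> F (x - 1)) (at_right (x - 1))" using rc[of "x-1"] by (simp add: continuous_within)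
        then have "(F \<longlongrightarrow> F (x - 1)) (filtermap (\<lambda>s. s - 1) (at_right x))"
          by (simp add: filtermap_at_right_shift)
        then have "((\<lambda>s. F (s - 1)) \<longlongrightarrow> F (x - 1)) (at_right x)"
          by (simp add: tendsto_compose_filtermap[symmetric] o_def)
        then have "(insf F y \<longlongrightarrow> F (x - 1)) (at_right x)" by (rule tendsto_cong[THEN iffD1, OF ev])
        then show ?thesis using False f1 by (simp add: continuous_within insf_def)
      qed
    qed
    show "insf F y x = 0" if "x < min a y" for x using that ab by (simp add: insf_def)
    show "insf F y x = 1" if "max (b+1) (y+1) \<le> x" for x using that ab by (simp add: insf_def)
  qed
qed

lemma utility_flat: "utility (flat y)"
  unfolding utility_def flat_def
  by (auto simp: mono_def intro!: continuous_intros)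

lemma utility_clampu: "utility (clampu y)"
  unfolding utility_def clampu_def
  by (auto simp: mono_def intro!: continuous_intros)

lemma utility_const: "utility (\<lambda>_. c)"
  unfolding utility_def by (auto simp: mono_def)

lemma flat_pre1: "t < y \<Longrightarrow> {s. flat y s \<le> t} = {..t}"
  unfolding flat_def by (auto simp: max_def min_def)

lemma flat_pre2: "y \<le> t \<Longrightarrow> {s. flat y s \<le> t} = {..t+1}"
  unfolding flat_def by (auto simp: max_def min_def)

lemma clampu_pre:
  "t < 0 \<Longrightarrow> {s. clampu y s \<le> t} = {}"
  "0 \<le> t \<Longrightarrow> t < 1 \<Longrightarrow> {s. clampu y s \<le> t} = {..y+t}"
  "1 \<le> t \<Longrightarrow> {s. clampu y s \<le> t} = UNIV"
  unfolding clampu_def by (auto simp: max_def min_def)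

lemma const_pre:
  "t < (c::real) \<Longrightarrow> {s::real. (\<lambda>_. c) s \<le> t} = {}"
  "(c::real) \<le> t \<Longrightarrow> {s::real. (\<lambda>_. c) s \<le> t} = UNIV"
  by auto


lemma ut_cdfM:
  assumes F: "F \<in> cdfM" and u: "utility u"
  shows "utility_transform u F \<in> cdfM"
proof -
  have m: "\<And>x y. x \<le> y \<Longrightarrow> F x \<le> F y" using cdfM_D(1)[OF F] by (simp add: monoD)
  have RD: "real_distribution (interval_measure F)"
    by (rule real_distribution_interval_measure[OF m cdfM_D(2-4)[OF F]])
  then interpret prob_space "interval_measure F" by (simp add: real_distribution_def)
  have "u \<in> borel_measurable borel"
    using u unfolding utility_def by (intro borel_measurable_continuous_onI) simp
  then have um: "u \<in> measurable (interval_measure F) borel"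
    by (simp add: measurable_def)
  have RD2: "real_distribution (distr (interval_measure F) borel u)" using um by simp
  interpret D: real_distribution "distr (interval_measure F) borel u" by (rule RD2)
  have mo: "mono u" using u unfolding utility_def by auto
  obtain a b where ab: "\<forall>x. (x < a \<longrightarrow> F x = 0) \<and> (b \<le> x \<longrightarrow> F x = 1)"
    using cdfM_D(5)[OF F] by blast
  show ?thesis
  proof (rule cdfM_I[where a="u (a-1)" and b="u b"])
    show "mono (utility_transform u F)"
      unfolding utility_transform_def by (rule monoI) (rule D.cdf_nondecreasing)
    show "continuous (at_right x) (utility_transform u F)" for x
      unfolding utility_transform_def by (rule D.cdf_is_right_cont)
    show "utility_transform u F x = 0" if x: "x < u (a-1)" for x
    proof -
      consider (e') "{s. u s \<le> x} = {}" | (U') "{s. u s \<le> x} = UNIV" | (c') c where "{s. u s \<le> x} = {..c}" "u c = x"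
        using pre_struct[OF u, of x] by blast
      then show ?thesis
      proof cases
        case e' then show ?thesis using ut_vals(3)[OF F u] by simp
      next
        case U' then have "u (a-1) \<le> x" by blast
        then show ?thesis using x by simp
      next
        case c'
        have "c < a - 1"
        proof (rule ccontr)
          assume "\<not> c < a - 1"
          then have "u (a-1) \<le> u c" using mo by (simp add: monoD)
          then show False using c' x by simp
        qed
        then show ?thesis using ut_vals(1)[OF F u c'(1)] ab by simp
      qed
    qed
    show "utility_transform u F x = 1" if x: "u b \<le> x" for x
    proof -
      have bx: "b \<in> {s. u s \<le> x}" using x by simp
      consider (e') "{s. u s \<le> x} = {}" | (U') "{s. u s \<le> x} = UNIV" | (c') c where "{s. u s \<le> x} = {..c}" "u c = x"
        using pre_struct[OF u, of x] by blast
      then show ?thesis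
      proof cases
        case e' then show ?thesis using bx by simp
      next
        case U' then show ?thesis using ut_vals(2)[OF F u] by simp
      next
        case c'
        then have "b \<le> c" using bx by simp
        then show ?thesis using ut_vals(1)[OF F u c'(1)] ab by simp
      qed
    qed
  qed
qed

lemma fwd:
  fixes T :: "(real \<Rightarrow> real) \<Rightarrow> (real \<Rightarrow> real)"
  assumes TM: "\<forall>F\<in>cdfM. T F \<in> cdfM"
    and H: "\<forall>u. utility u \<longrightarrow> (\<forall>F\<in>cdfM. T (utility_transform u F) = utility_transform u (T F))"
  shows "\<exists>d. distortion d \<and> (\<forall>F\<in>cdfM. T F = prob_distortion d F)"
proof -
  define d where "d p = T (bern p) 0" for p
  have key: "d (F y) \<le> T F y \<and> (\<forall>x<y. T F x \<le> d (F y))" if F: "F \<in> cdfM" for F y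
  proof -
    let ?K = "insf F y"
    have K: "?K \<in> cdfM" by (rule insf_cdfM[OF F])
    have TK: "T ?K \<in> cdfM" using TM K by blast
    have e1: "utility_transform (flat y) ?K = F"
    proof
      fix t show "utility_transform (flat y) ?K t = F t"
      proof (cases "t < y")
        case True then show ?thesis using ut_vals(1)[OF K utility_flat flat_pre1[OF True]] by (simp add: insf_def)
      next
        case False then have "y \<le> t" by simp
        then show ?thesis using ut_vals(1)[OF K utility_flat flat_pre2[of y t]] by (simp add: insf_def)
      qed
    qed
    have e2: "utility_transform (clampu y) ?K = bern (F y)"
    proof
      fix t show "utility_transform (clampu y) ?K t = bern (F y) t"
      proof (cases "t < 0")
        case True then show ?thesis using ut_vals(3)[OF K utility_clampu clampu_pre(1)[OF True]] by (simp add: bern_def)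
      next
        case f1: False
        show ?thesis
        proof (cases "t < 1")
          case True then show ?thesis using f1 ut_vals(1)[OF K utility_clampu clampu_pre(2)[of t y]] by (simp add: bern_def insf_def)
        next
          case False then show ?thesis using f1 ut_vals(2)[OF K utility_clampu clampu_pre(3)[of t y]] by (simp add: bern_def)
        qed
      qed
    qed
    have TF: "T F = utility_transform (flat y) (T ?K)" using H utility_flat K e1 by metis
    have dF: "d (F y) = utility_transform (clampu y) (T ?K) 0" unfolding d_def using H utility_clampu K e2 by metis
    have "d (F y) = T ?K y" using dF ut_vals(1)[OF TK utility_clampu clampu_pre(2)[of 0 y]] by simp
    moreover have "T F y = T ?K (y+1)" using TF ut_vals(1)[OF TK utility_flat flat_pre2[of y y]] by simp
    moreover have "T F x = T ?K x" if "x < y" for x using TF ut_vals(1)[OF TK utility_flat flat_pre1[OF that]] by simp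
    moreover have "mono (T ?K)" using cdfM_D(1)[OF TK] .
    ultimately show ?thesis by (auto simp: monoD)
  qed
  have d01: "0 \<le> d p \<and> d p \<le> 1" if "0 \<le> p" "p \<le> 1" for p
  proof -
    have "T (bern p) \<in> cdfM" using TM bern_cdfM[OF that] by blast
    then show ?thesis unfolding d_def using cdfM_bounds by blast
  qed
  have dmono: "d p \<le> d q" if "0 \<le> p" "p \<le> q" "q \<le> 1" for p q
  proof -
    have S: "step3 p q \<in> cdfM" by (rule step3_cdfM[OF that])
    have "d (step3 p q 0) \<le> T (step3 p q) 0" using key[OF S, of 0] by simp
    also have "\<dots> \<le> d (step3 p q 1)" using key[OF S, of 1] by simp
    finally show ?thesis by (simp add: step3_def)
  qed
  have d0: "d 0 = 0"
  proof -
    have B: "bern 0 \<in> cdfM" by (rule bern_cdfM) auto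
    have TB: "T (bern 0) \<in> cdfM" using TM B by blast
    have "utility_transform (\<lambda>_. 1) (bern 0) = bern 0"
    proof
      fix t :: real show "utility_transform (\<lambda>_. 1) (bern 0) t = bern 0 t"
        using ut_vals(3)[OF B utility_const const_pre(1)[of t 1]]
          ut_vals(2)[OF B utility_const const_pre(2)[of 1 t]]
        by (cases "t < 1") (auto simp: bern_def)
    qed
    then have "T (bern 0) = utility_transform (\<lambda>_. 1) (T (bern 0))" using H utility_const B by metis
    then show ?thesis unfolding d_def using ut_vals(3)[OF TB utility_const const_pre(1)[of 0 1]] by simp
  qed
  have d1: "d 1 = 1"
  proof -
    have B: "bern 1 \<in> cdfM" by (rule bern_cdfM) auto
    have TB: "T (bern 1) \<in> cdfM" using TM B by blast
    have "utility_transform (\<lambda>_. 0) (bern 1) = bern 1"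
    proof
      fix t :: real show "utility_transform (\<lambda>_. 0) (bern 1) t = bern 1 t"
        using ut_vals(3)[OF B utility_const const_pre(1)[of t 0]]
          ut_vals(2)[OF B utility_const const_pre(2)[of 0 t]]
        by (cases "t < 0") (auto simp: bern_def)
    qed
    then have "T (bern 1) = utility_transform (\<lambda>_. 0) (T (bern 1))" using H utility_const B by metis
    then show ?thesis unfolding d_def using ut_vals(2)[OF TB utility_const const_pre(2)[of 0 0]] by simp
  qed
  have dist: "distortion d"
    unfolding distortion_def
    using d0 d1 d01 dmono by (auto simp: mono_on_def)
  have "T F = prob_distortion d F" if F: "F \<in> cdfM" for F
  proof
    fix x
    have TF: "T F \<in> cdfM" using TM F by blast
    have lim: "(T F \<longlongrightarrow> T F x) (at_right x)" using cdfM_D(2)[OF TF, of x] by (simp add: continuous_within)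
    have "((\<lambda>y. d (F y)) \<longlongrightarrow> T F x) (at_right x)"
    proof (rule tendsto_sandwich[OF _ _ tendsto_const lim])
      show "\<forall>\<^sub>F y in at_right x. T F x \<le> d (F y)"
        using key[OF F] eventually_at_right_less[of x] by (auto elim: eventually_mono)
      show "\<forall>\<^sub>F y in at_right x. d (F y) \<le> T F y"
        using key[OF F] by auto
    qed
    then show "T F x = prob_distortion d F x" unfolding prob_distortion_def
      by (intro tendsto_Lim[symmetric]) simp_all
  qed
  then show ?thesis using dist by blast
qed

theorem theorem1:
  fixes T :: "(real \<Rightarrow> real) \<Rightarrow> (real \<Rightarrow> real)"
  assumes "\<forall>F\<in>cdfM. T F \<in> cdfM"
  shows "(\<forall>u. utility u \<longrightarrow>
            (\<forall>F\<in>cdfM. T (utility_transform u F) = utility_transform u (T F)))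
         \<longleftrightarrow> (\<exists>d. distortion d \<and> (\<forall>F\<in>cdfM. T F = prob_distortion d F))"
proof
  assume "\<forall>u. utility u \<longrightarrow> (\<forall>F\<in>cdfM. T (utility_transform u F) = utility_transform u (T F))"
  then show "\<exists>d. distortion d \<and> (\<forall>F\<in>cdfM. T F = prob_distortion d F)" by (rule fwd[OF assms])
next
  assume "\<exists>d. distortion d \<and> (\<forall>F\<in>cdfM. T F = prob_distortion d F)"
  then obtain d where d: "distortion d" "\<forall>F\<in>cdfM. T F = prob_distortion d F" by blast
  show "\<forall>u. utility u \<longrightarrow> (\<forall>F\<in>cdfM. T (utility_transform u F) = utility_transform u (T F))"
  proof (intro allI impI ballI)
    fix u F assume u: "utility u" and F: "F \<in> cdfM"
    have UF: "utility_transform u F \<in> cdfM" by (rule ut_cdfM[OF F u])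
    show "T (utility_transform u F) = utility_transform u (T F)"
      using d(2) UF F commute_pd[OF d(1) F u] by auto
  qed
qed

end
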